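(* For every finite simple graph $G$ with at least one edge, there exists a non-isolated vertex $v$ of $G$ such that $\alpha(G)=\alpha(G-v)\ge \alpha(G-N[v])+1$.
   Context: $\alpha(H)$ denotes the independence number of a graph $H$ (maximum size of an independent set). For $S\subseteq V(G)$, $G-S$ is the graph obtained by deleting the vertices of $S$ and their incident edges; $G-v=G-\{v\}$; $N[v]$ is the closed neighbourhood of $v$ (i.e. $v$ together with its neighbours). *)

theory Defs
  imports Main
begin

definition simple_graph :: "'a set \<Rightarrow> ('a \<Rightarrow> 'a \<Rightarrow> bool) \<Rightarrow> bool" where
  "simple_graph V E \<longleftrightarrow> finite V \<and> (\<forall>u v. E u v \<longrightarrow> u \<in> V \<and> v \<in> V)
     \<and> (\<forall>u v. E u v \<longrightarrow> E v u) \<and> (\<forall>v. \<not> E v v)"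

definition indep_set :: "('a \<Rightarrow> 'a \<Rightarrow> bool) \<Rightarrow> 'a set \<Rightarrow> bool" where
  "indep_set E S \<longleftrightarrow> (\<forall>u\<in>S. \<forall>v\<in>S. \<not> E u v)"

text \<open>Independence number of the induced subgraph of (V,E) on vertex set W
(deleting vertices = taking the induced subgraph on the remaining ones).\<close>
definition alpha :: "'a set \<Rightarrow> ('a \<Rightarrow> 'a \<Rightarrow> bool) \<Rightarrow> nat" where
  "alpha W E = Max {card S | S. S \<subseteq> W \<and> indep_set E S}"

definition closed_nbhd :: "('a \<Rightarrow> 'a \<Rightarrow> bool) \<Rightarrow> 'a \<Rightarrow> 'a set" where
  "closed_nbhd E v = insert v {u. E v u}"

end

theory Submission
  imports Defs
begin

lemma alpha_fin:
  assumes "finite W"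
  shows "finite {card S | S. S \<subseteq> W \<and> indep_set E S}"
proof -
  have "{card S | S. S \<subseteq> W \<and> indep_set E S} \<subseteq> card ` Pow W" by auto
  thus ?thesis using assms finite_subset by blast
qed

lemma alpha_ge:
  assumes "finite W" "S \<subseteq> W" "indep_set E S"
  shows "card S \<le> alpha W E"
  unfolding alpha_def using assms alpha_fin[OF assms(1)] by (intro Max_ge) auto

lemma alpha_obt:
  assumes "finite W"
  shows "\<exists>S. S \<subseteq> W \<and> indep_set E S \<and> card S = alpha W E"
proof -
  have ne: "{card S | S. S \<subseteq> W \<and> indep_set E S} \<noteq> {}"
    by (rule ccontr) (auto simp: indep_set_def)
  have "alpha W E \<in> {card S | S. S \<subseteq> W \<and> indep_set E S}"
    unfolding alpha_def using Max_in[OF alpha_fin[OF assms] ne] .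
  thus ?thesis by auto
qed

theorem lemma1:
  fixes V :: "'a set" and E :: "'a \<Rightarrow> 'a \<Rightarrow> bool"
  assumes "simple_graph V E"
    and "\<exists>u v. E u v"
  shows "\<exists>v\<in>V. (\<exists>u. E v u) \<and> alpha V E = alpha (V - {v}) E
           \<and> alpha (V - {v}) E \<ge> alpha (V - closed_nbhd E v) E + 1"
proof -
  have fin: "finite V" and inV: "\<And>u v. E u v \<Longrightarrow> u \<in> V \<and> v \<in> V"
    and sym: "\<And>u v. E u v \<Longrightarrow> E v u" and irr: "\<And>v. \<not> E v v"
    using assms(1) unfolding simple_graph_def by auto
  obtain S where S: "S \<subseteq> V" "indep_set E S" "card S = alpha V E"
    using alpha_obt[OF fin] by blast
  obtain a b where ab: "E a b" using assms(2) by blast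
  have "\<exists>v u. E v u \<and> v \<notin> S"
  proof (cases "a \<in> S")
    case True
    then have "b \<notin> S" using S(2) ab unfolding indep_set_def by blast
    then show ?thesis using sym[OF ab] by blast
  next
    case False then show ?thesis using ab by blast
  qed
  then obtain v u where vu: "E v u" "v \<notin> S" by blast
  have vV: "v \<in> V" using inV[OF vu(1)] by blast
  have fin1: "finite (V - {v})" using fin by simp
  have eq: "alpha V E = alpha (V - {v}) E"
  proof (rule antisym)
    show "alpha V E \<le> alpha (V - {v}) E"
      using alpha_ge[OF fin1, of S E] S vu(2) by auto
    obtain T where T: "T \<subseteq> V - {v}" "indep_set E T" "card T = alpha (V - {v}) E"
      using alpha_obt[OF fin1] by blast
    show "alpha (V - {v}) E \<le> alpha V E"
      using alpha_ge[OF fin, of T E] T by auto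
  qed
  have fin2: "finite (V - closed_nbhd E v)" using fin by simp
  obtain T where T: "T \<subseteq> V - closed_nbhd E v" "indep_set E T"
      "card T = alpha (V - closed_nbhd E v) E"
    using alpha_obt[OF fin2] by blast
  have vT: "v \<notin> T" using T(1) by (auto simp: closed_nbhd_def)
  have ind: "indep_set E (insert v T)"
    using T(1,2) irr sym unfolding indep_set_def closed_nbhd_def by blast
  have "finite T" using T(1) fin finite_subset by blast
  then have "card (insert v T) = card T + 1" using vT by simp
  moreover have "card (insert v T) \<le> alpha V E"
    using alpha_ge[OF fin _ ind] T(1) vV by auto
  ultimately show ?thesis using vV vu eq T(3) by auto
qed

end
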